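(* $\mathrm{REG}\nsubseteq\mathrm{1QFA}/n$, and thus $\mathrm{1QFA}/n\neq\mathrm{REG}/n$.
   Context: $\mathrm{REG}$ is the family of regular languages. A 1qfa is a one-way measure-many quantum finite automaton. For equal-length strings $x,y$, $\genfrac{[}{]}{0pt}{}{x}{y}$ is the two-track string with $x$ on the upper track and $y$ on the lower track. $\mathrm{REG}/n$ is the family of languages $L$ for which there exist a one-way deterministic finite automaton $M$, an advice alphabet $\Gamma$ and an advice function $h:\mathbb{N}\to\Gamma^*$ with $|h(n)|=n$ such that for all $x$, $x\in L$ iff $M$ accepts $\genfrac{[}{]}{0pt}{}{x}{h(|x|)}$. $\mathrm{1QFA}/n$ is defined in the same way with a 1qfa that outputs $L(x)$ with probability at least $1-\varepsilon$ for some constant $\varepsilon\in[0,1/2)$. (The separating language used is $(aa+ab+ba)^*$ over $\{a,b\}$.) It is known that $\mathrm{1QFA}/n\subseteq\mathrm{REG}/n$. *)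

theory Defs
  imports Complex_Main
begin

datatype ab = SymA | SymB

definition dfa_ok :: "nat \<Rightarrow> (nat \<Rightarrow> 'a \<Rightarrow> nat) \<Rightarrow> nat \<Rightarrow> bool" where
  "dfa_ok k delta q0 \<longleftrightarrow> q0 < k \<and> (\<forall>q<k. \<forall>s. delta q s < k)"

definition REG :: "'a list set set" where
  "REG = {L. \<exists>k delta q0 F. dfa_ok k delta q0 \<and> L = {x. foldl delta q0 x \<in> F}}"

definition advice_ok :: "nat \<Rightarrow> (nat \<Rightarrow> nat list) \<Rightarrow> bool" where
  "advice_ok g h \<longleftrightarrow> (\<forall>n. length (h n) = n \<and> set (h n) \<subseteq> {..<g})"

text \<open>Two-track string: x on the upper track, advice on the lower track.\<close>

definition track :: "'a list \<Rightarrow> nat list \<Rightarrow> ('a \<times> nat) list" where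
  "track x y = zip x y"

definition REG_n :: "'a list set set" where
  "REG_n = {L. \<exists>g h k (delta :: nat \<Rightarrow> ('a \<times> nat) \<Rightarrow> nat) q0 F.
      advice_ok g h \<and> dfa_ok k delta q0 \<and>
      (\<forall>x. x \<in> L \<longleftrightarrow> foldl delta q0 (track x (h (length x))) \<in> F)}"

datatype 'a tape = LEnd | Sym 'a | REnd

definition tape_of :: "'a list \<Rightarrow> 'a tape list" where
  "tape_of w = LEnd # map Sym w @ [REnd]"

text \<open>Vectors in C^k are functions nat => complex (entries outside {..<k} ignored);
k x k matrices are functions nat => nat => complex.\<close>

definition mv :: "nat \<Rightarrow> (nat \<Rightarrow> nat \<Rightarrow> complex) \<Rightarrow> (nat \<Rightarrow> complex) \<Rightarrow> (nat \<Rightarrow> complex)" where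
  "mv k U v = (\<lambda>i. if i < k then (\<Sum>j<k. U i j * v j) else 0)"

definition unitary_k :: "nat \<Rightarrow> (nat \<Rightarrow> nat \<Rightarrow> complex) \<Rightarrow> bool" where
  "unitary_k k U \<longleftrightarrow>
     (\<forall>i<k. \<forall>j<k. (\<Sum>l<k. cnj (U l i) * U l j) = (if i = j then 1 else 0))"

definition proj :: "nat set \<Rightarrow> (nat \<Rightarrow> complex) \<Rightarrow> (nat \<Rightarrow> complex)" where
  "proj S v = (\<lambda>i. if i \<in> S then v i else 0)"

definition nsq :: "nat \<Rightarrow> (nat \<Rightarrow> complex) \<Rightarrow> real" where
  "nsq k v = (\<Sum>i<k. (cmod (v i))\<^sup>2)"

text \<open>haltp k U N H w psi: total probability of halting in a state of H while reading w,
starting from the (unnormalised) state psi; after each step the state is measured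
with respect to accepting / rejecting / non-halting subspaces and only the
non-halting part (states N) continues.\<close>

fun haltp :: "nat \<Rightarrow> ('b \<Rightarrow> nat \<Rightarrow> nat \<Rightarrow> complex) \<Rightarrow> nat set \<Rightarrow> nat set \<Rightarrow> 'b list
              \<Rightarrow> (nat \<Rightarrow> complex) \<Rightarrow> real" where
  "haltp k U N H [] psi = 0"
| "haltp k U N H (s # w) psi =
     nsq k (proj H (mv k (U s) psi)) + haltp k U N H w (proj N (mv k (U s) psi))"

definition qfa_ok :: "nat \<Rightarrow> ('a tape \<Rightarrow> nat \<Rightarrow> nat \<Rightarrow> complex) \<Rightarrow> nat set \<Rightarrow> nat set \<Rightarrow> nat \<Rightarrow> bool" where
  "qfa_ok k U A R q0 \<longleftrightarrow> A \<subseteq> {..<k} \<and> R \<subseteq> {..<k} \<and> A \<inter> R = {} \<and>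
     q0 < k \<and> q0 \<notin> A \<and> q0 \<notin> R \<and> (\<forall>s. unitary_k k (U s))"

definition acc_prob :: "nat \<Rightarrow> ('a tape \<Rightarrow> nat \<Rightarrow> nat \<Rightarrow> complex) \<Rightarrow> nat set \<Rightarrow> nat set \<Rightarrow> nat
                        \<Rightarrow> 'a list \<Rightarrow> real" where
  "acc_prob k U A R q0 w =
     haltp k U ({..<k} - A - R) A (tape_of w) (\<lambda>i. if i = q0 then 1 else 0)"

definition rej_prob :: "nat \<Rightarrow> ('a tape \<Rightarrow> nat \<Rightarrow> nat \<Rightarrow> complex) \<Rightarrow> nat set \<Rightarrow> nat set \<Rightarrow> nat
                        \<Rightarrow> 'a list \<Rightarrow> real" where
  "rej_prob k U A R q0 w =
     haltp k U ({..<k} - A - R) R (tape_of w) (\<lambda>i. if i = q0 then 1 else 0)"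

definition QFA_n :: "'a list set set" where
  "QFA_n = {L. \<exists>(eps::real) g h k (U :: ('a \<times> nat) tape \<Rightarrow> nat \<Rightarrow> nat \<Rightarrow> complex) A R q0.
      0 \<le> eps \<and> eps < 1/2 \<and> advice_ok g h \<and> qfa_ok k U A R q0 \<and>
      (\<forall>x. (x \<in> L \<longrightarrow> acc_prob k U A R q0 (track x (h (length x))) \<ge> 1 - eps) \<and>
           (x \<notin> L \<longrightarrow> rej_prob k U A R q0 (track x (h (length x))) \<ge> 1 - eps))}"

end

theory Submission imports Defs "HOL-Analysis.L2_Norm" begin



definition nrm :: "nat \<Rightarrow> (nat \<Rightarrow> complex) \<Rightarrow> real" where
  "nrm k v = sqrt (nsq k v)"

lemma nsq_nonneg: "0 \<le> nsq k v"
  unfolding nsq_def by (rule sum_nonneg) simp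

lemma nrm_L2: "nrm k v = L2_set (\<lambda>i. cmod (v i)) {..<k}"
  unfolding nrm_def nsq_def L2_set_def by simp

lemma nrm_nonneg: "0 \<le> nrm k v" unfolding nrm_def by (simp add: nsq_nonneg)

lemma nrm_tri: "nrm k (\<lambda>i. v i + w i) \<le> nrm k v + nrm k w"
proof -
  have "nrm k (\<lambda>i. v i + w i) \<le> L2_set (\<lambda>i. cmod (v i) + cmod (w i)) {..<k}"
    unfolding nrm_L2 by (rule L2_set_mono) (auto simp: norm_triangle_ineq)
  also have "\<dots> \<le> nrm k v + nrm k w"
    unfolding nrm_L2 by (rule L2_set_triangle_ineq)
  finally show ?thesis .
qed

lemma nsq_cong: "(\<And>i. i < k \<Longrightarrow> v i = w i) \<Longrightarrow> nsq k v = nsq k w"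
  unfolding nsq_def by (rule sum.cong) auto

lemma nrm_cong: "(\<And>i. i < k \<Longrightarrow> v i = w i) \<Longrightarrow> nrm k v = nrm k w"
  unfolding nrm_def using nsq_cong by metis

lemma nsq_minus_comm: "nsq k (v - w) = nsq k (w - v)"
  unfolding nsq_def by (simp add: norm_minus_commute)

lemma nrm_minus_comm: "nrm k (v - w) = nrm k (w - v)"
  unfolding nrm_def using nsq_minus_comm by metis

lemma nrm_tri_diff: "nrm k (v - w) \<le> nrm k (v - u) + nrm k (u - w)"
proof -
  have "nrm k (v - w) = nrm k (\<lambda>i. (v - u) i + (u - w) i)" by (rule nrm_cong) simp
  also have "\<dots> \<le> nrm k (v - u) + nrm k (u - w)" by (rule nrm_tri)
  finally show ?thesis .
qed

lemma mv_diff: "mv k U (v - w) = mv k U v - mv k U w"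
  unfolding mv_def by (auto simp: algebra_simps sum_subtractf)

lemma proj_diff: "proj S (v - w) = proj S v - proj S w"
  unfolding proj_def by auto

lemma unitary_nsq:
  assumes "unitary_k k U"
  shows "nsq k (mv k U v) = nsq k v"
proof -
  have "complex_of_real (nsq k (mv k U v)) = (\<Sum>i<k. mv k U v i * cnj (mv k U v i))"
    unfolding nsq_def by (simp only: of_real_sum complex_norm_square)
  also have "\<dots> = (\<Sum>i<k. (\<Sum>j<k. U i j * v j) * cnj (\<Sum>l<k. U i l * v l))"
    unfolding mv_def by (rule sum.cong) auto
  also have "\<dots> = (\<Sum>i<k. \<Sum>l<k. \<Sum>j<k. (U i j * v j) * (cnj (U i l) * cnj (v l)))"
    by (simp add: sum_distrib_left sum_distrib_right)
  also have "\<dots> = (\<Sum>l<k. \<Sum>i<k. \<Sum>j<k. (U i j * v j) * (cnj (U i l) * cnj (v l)))"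
    by (rule sum.swap)
  also have "\<dots> = (\<Sum>l<k. \<Sum>j<k. \<Sum>i<k. (U i j * v j) * (cnj (U i l) * cnj (v l)))"
    by (rule sum.cong[OF refl], rule sum.swap)
  also have "\<dots> = (\<Sum>l<k. \<Sum>j<k. (v j * cnj (v l)) * (\<Sum>i<k. cnj (U i l) * U i j))"
    by (simp add: sum_distrib_left mult_ac)
  also have "\<dots> = (\<Sum>l<k. \<Sum>j<k. (v j * cnj (v l)) * (if l = j then 1 else 0))"
    using assms unfolding unitary_k_def by (intro sum.cong refl) auto
  also have "\<dots> = (\<Sum>l<k. v l * cnj (v l))"
    by (simp add: if_distrib cong: if_cong)
  also have "\<dots> = complex_of_real (nsq k v)"
    unfolding nsq_def by (simp only: of_real_sum complex_norm_square)
  finally show ?thesis using of_real_eq_iff by blast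
qed




locale qctx =
  fixes k :: nat and U :: "'s \<Rightarrow> nat \<Rightarrow> nat \<Rightarrow> complex" and A R :: "nat set"
  assumes A_sub: "A \<subseteq> {..<k}" and R_sub: "R \<subseteq> {..<k}" and AR: "A \<inter> R = {}"
    and unit: "\<And>s. unitary_k k (U s)"
begin

abbreviation "NN \<equiv> {..<k} - A - R"

definition stp :: "'s \<Rightarrow> (nat \<Rightarrow> complex) \<Rightarrow> (nat \<Rightarrow> complex)" where
  "stp s v = proj NN (mv k (U s) v)"

definition st :: "'s list \<Rightarrow> (nat \<Rightarrow> complex) \<Rightarrow> (nat \<Rightarrow> complex)" where
  "st w v = foldl (\<lambda>v s. stp s v) v w"

lemma st_Nil[simp]: "st [] v = v" by (simp add: st_def)
lemma st_Cons[simp]: "st (s # w) v = st w (stp s v)" by (simp add: st_def)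
lemma st_append: "st (w1 @ w2) v = st w2 (st w1 v)" by (simp add: st_def)

lemma haltp_Cons': "haltp k U NN H (s # w) v = nsq k (proj H (mv k (U s) v)) + haltp k U NN H w (stp s v)"
  by (simp add: stp_def)

lemma haltp_append: "haltp k U NN H (w1 @ w2) v = haltp k U NN H w1 v + haltp k U NN H w2 (st w1 v)"
  by (induction w1 arbitrary: v) (simp_all add: stp_def)

lemma haltp_nonneg: "0 \<le> haltp k U NN H w v"
  by (induction w arbitrary: v) (auto simp: nsq_nonneg)

lemma decomp: "nsq k x = nsq k (proj A x) + nsq k (proj R x) + nsq k (proj NN x)"
proof -
  have "\<And>i. i < k \<Longrightarrow> (cmod (x i))\<^sup>2 = (cmod (proj A x i))\<^sup>2 + (cmod (proj R x i))\<^sup>2 + (cmod (proj NN x i))\<^sup>2"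
    using AR by (auto simp: proj_def)
  then show ?thesis unfolding nsq_def by (simp add: sum.distrib)
qed

lemma decomp2: "nsq k x = nsq k (proj (A \<union> R) x) + nsq k (proj NN x)"
proof -
  have "\<And>i. i < k \<Longrightarrow> (cmod (x i))\<^sup>2 = (cmod (proj (A \<union> R) x i))\<^sup>2 + (cmod (proj NN x i))\<^sup>2"
    by (auto simp: proj_def)
  then show ?thesis unfolding nsq_def by (simp add: sum.distrib)
qed

lemma conservation: "haltp k U NN A w v + haltp k U NN R w v + nsq k (st w v) = nsq k v"
proof (induction w arbitrary: v)
  case Nil then show ?case by simp
next
  case (Cons s w)
  have "nsq k v = nsq k (mv k (U s) v)" using unitary_nsq[OF unit] by simp
  also have "\<dots> = nsq k (proj A (mv k (U s) v)) + nsq k (proj R (mv k (U s) v)) + nsq k (stp s v)"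
    unfolding stp_def by (rule decomp)
  finally show ?case using Cons.IH[of "stp s v"] by (simp add: stp_def)
qed

lemma haltp_le: "haltp k U NN A w v \<le> nsq k v" "haltp k U NN R w v \<le> nsq k v"
  "nsq k (st w v) \<le> nsq k v"
  using conservation[of w v] haltp_nonneg[of A w v] haltp_nonneg[of R w v] nsq_nonneg[of k "st w v"]
  by linarith+

lemma nrm_z1: "nrm k (v - (\<lambda>i. 0)) = nrm k v" by (rule nrm_cong) simp
lemma nrm_z2: "nrm k ((\<lambda>i. 0) - v) = nrm k v" using nrm_z1 nrm_minus_comm by metis
lemma nrm_tri2: "nrm k v \<le> nrm k (v - w) + nrm k w"
  using nrm_tri_diff[of k v "\<lambda>i. 0" w] by (simp add: nrm_z1)

lemma minkowski2:
  fixes x1 x2 y1 y2 a b :: real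
  assumes "\<bar>x1 - x2\<bar> \<le> a" "\<bar>y1 - y2\<bar> \<le> b"
  shows "\<bar>sqrt (x1\<^sup>2 + y1\<^sup>2) - sqrt (x2\<^sup>2 + y2\<^sup>2)\<bar> \<le> sqrt (a\<^sup>2 + b\<^sup>2)"
proof -
  have c1: "sqrt (x1\<^sup>2 + y1\<^sup>2) = cmod (Complex x1 y1)" by (simp add: cmod_def)
  have c2: "sqrt (x2\<^sup>2 + y2\<^sup>2) = cmod (Complex x2 y2)" by (simp add: cmod_def)
  have "\<bar>cmod (Complex x1 y1) - cmod (Complex x2 y2)\<bar> \<le> cmod (Complex x1 y1 - Complex x2 y2)"
    by (rule norm_triangle_ineq3)
  also have "\<dots> = sqrt ((x1 - x2)\<^sup>2 + (y1 - y2)\<^sup>2)" by (simp add: cmod_def)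
  also have "\<dots> \<le> sqrt (a\<^sup>2 + b\<^sup>2)"
  proof -
    have "(x1 - x2)\<^sup>2 \<le> a\<^sup>2" using assms(1) by (metis abs_ge_zero abs_le_square_iff abs_of_nonneg order_trans power2_abs)
    moreover have "(y1 - y2)\<^sup>2 \<le> b\<^sup>2" using assms(2) by (metis abs_ge_zero abs_le_square_iff abs_of_nonneg order_trans power2_abs)
    ultimately show ?thesis by simp
  qed
  finally show ?thesis using c1 c2 by simp
qed

lemma seminorm:
  assumes H: "H \<subseteq> {..<k}" "H \<inter> NN = {}"
  shows "\<bar>sqrt (haltp k U NN H w v) - sqrt (haltp k U NN H w u)\<bar> \<le> nrm k (v - u)"
proof (induction w arbitrary: v u)
  case Nil then show ?case by (simp add: nrm_nonneg)
next
  case (Cons s w)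
  let ?P = "mv k (U s) v" and ?Q = "mv k (U s) u"
  define x1 where "x1 = nrm k (proj H ?P)"
  define x2 where "x2 = nrm k (proj H ?Q)"
  define y1 where "y1 = sqrt (haltp k U NN H w (stp s v))"
  define y2 where "y2 = sqrt (haltp k U NN H w (stp s u))"
  define a where "a = nrm k (proj H (?P - ?Q))"
  define b where "b = nrm k (stp s v - stp s u)"
  have e1: "haltp k U NN H (s # w) v = x1\<^sup>2 + y1\<^sup>2"
    unfolding haltp_Cons' x1_def y1_def nrm_def by (simp add: nsq_nonneg haltp_nonneg)
  have e2: "haltp k U NN H (s # w) u = x2\<^sup>2 + y2\<^sup>2"
    unfolding haltp_Cons' x2_def y2_def nrm_def by (simp add: nsq_nonneg haltp_nonneg)
  have ha: "\<bar>x1 - x2\<bar> \<le> a"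
  proof -
    have "x1 \<le> x2 + a" unfolding x1_def x2_def a_def
      using nrm_tri2[of "proj H ?P" "proj H ?Q"] by (simp add: proj_diff)
    moreover have "x2 \<le> x1 + a" unfolding x1_def x2_def a_def
      using nrm_tri2[of "proj H ?Q" "proj H ?P"] nrm_minus_comm[of k "proj H ?P" "proj H ?Q"]
      by (simp add: proj_diff)
    ultimately show ?thesis by linarith
  qed
  have hb: "\<bar>y1 - y2\<bar> \<le> b" unfolding y1_def y2_def b_def by (rule Cons.IH)
  have "a\<^sup>2 + b\<^sup>2 \<le> nsq k (?P - ?Q)"
  proof -
    have "a\<^sup>2 = nsq k (proj H (?P - ?Q))" unfolding a_def nrm_def by (simp add: nsq_nonneg)
    moreover have "b\<^sup>2 = nsq k (proj NN (?P - ?Q))" unfolding b_def nrm_def stp_def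
      by (simp add: nsq_nonneg proj_diff)
    moreover have "nsq k (proj H (?P - ?Q)) + nsq k (proj NN (?P - ?Q)) \<le> nsq k (?P - ?Q)"
    proof -
      have "\<And>i. i < k \<Longrightarrow> (cmod (proj H (?P - ?Q) i))\<^sup>2 + (cmod (proj NN (?P - ?Q) i))\<^sup>2 \<le> (cmod ((?P - ?Q) i))\<^sup>2"
        using H by (auto simp: proj_def)
      then show ?thesis unfolding nsq_def sum.distrib[symmetric] by (intro sum_mono) auto
    qed
    ultimately show ?thesis by simp
  qed
  also have "\<dots> = nsq k (v - u)" by (simp add: mv_diff[symmetric] unitary_nsq[OF unit])
  finally have fin: "sqrt (a\<^sup>2 + b\<^sup>2) \<le> nrm k (v - u)" unfolding nrm_def by simp
  show ?case unfolding e1 e2 using minkowski2[OF ha hb] fin by linarith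
qed

lemma step_dist:
  "nrm k (v - u) \<le> nrm k (stp s v - stp s u) + sqrt (nsq k v - nsq k (stp s v)) + sqrt (nsq k u - nsq k (stp s u))"
proof -
  let ?P = "mv k (U s) v" and ?Q = "mv k (U s) u"
  have dv: "nsq k v - nsq k (stp s v) = nsq k (proj (A \<union> R) ?P)"
    using decomp2[of ?P] unitary_nsq[OF unit, of s v] unfolding stp_def by simp
  have du: "nsq k u - nsq k (stp s u) = nsq k (proj (A \<union> R) ?Q)"
    using decomp2[of ?Q] unitary_nsq[OF unit, of s u] unfolding stp_def by simp
  have "nrm k (v - u) = nrm k (?P - ?Q)"
    unfolding nrm_def by (simp add: mv_diff[symmetric] unitary_nsq[OF unit])
  also have "\<dots> = nrm k (\<lambda>i. (stp s v - stp s u) i + (proj (A \<union> R) ?P - proj (A \<union> R) ?Q) i)"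
    by (rule nrm_cong) (auto simp: stp_def proj_def)
  also have "\<dots> \<le> nrm k (stp s v - stp s u) + nrm k (proj (A \<union> R) ?P - proj (A \<union> R) ?Q)"
    by (rule nrm_tri)
  also have "nrm k (proj (A \<union> R) ?P - proj (A \<union> R) ?Q) \<le> nrm k (proj (A \<union> R) ?P - (\<lambda>i. 0)) + nrm k ((\<lambda>i. 0) - proj (A \<union> R) ?Q)"
    by (rule nrm_tri_diff)
  also have "\<dots> = nrm k (proj (A \<union> R) ?P) + nrm k (proj (A \<union> R) ?Q)"
    by (simp add: nrm_z1 nrm_z2)
  finally show ?thesis using dv du unfolding nrm_def by simp
qed

end



lemma floor_eq_close: "\<lfloor>x::real\<rfloor> = \<lfloor>y\<rfloor> \<Longrightarrow> \<bar>x - y\<bar> < 1"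
  using floor_correct[of x] floor_correct[of y] by (simp add: abs_if) linarith

lemma cmod_le_nsq: "i < k \<Longrightarrow> (cmod (v i))\<^sup>2 \<le> nsq k v"
  unfolding nsq_def by (rule member_le_sum) auto

lemma cmod_sq_scale: "(cmod z)\<^sup>2 * m\<^sup>2 = (Re z * m)\<^sup>2 + (Im z * m)\<^sup>2"
  by (simp add: cmod_power2 power_mult_distrib distrib_right)

definition cell :: "nat \<Rightarrow> nat \<Rightarrow> (nat \<Rightarrow> complex) \<Rightarrow> (int \<times> int) list" where
  "cell k M v = map (\<lambda>i. (\<lfloor>Re (v i) * real M\<rfloor>, \<lfloor>Im (v i) * real M\<rfloor>)) [0..<k]"

lemma packing:
  fixes f :: "'i \<Rightarrow> nat \<Rightarrow> complex" and M :: nat and d :: real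
  assumes bnd: "\<forall>i\<in>I. nsq k (f i) \<le> 1"
    and sep: "\<forall>i\<in>I. \<forall>j\<in>I. i \<noteq> j \<longrightarrow> d \<le> nrm k (f i - f j)"
    and dpos: "0 < d" and dM: "real (2*k) \<le> (d * real M)\<^sup>2" and Mpos: "M > 0"
  shows "card I \<le> (2*M+1)^(2*k)"
proof -
  define S where "S = {-int M..int M} \<times> {-int M..int M}"
  define Cells where "Cells = {cs. set cs \<subseteq> S \<and> length cs = k}"
  have finS: "finite S" unfolding S_def by simp
  have n1: "nat (2 * int M + 1) = 2*M+1" by linarith
  have cardS: "card S = (2*M+1)^2" unfolding S_def
    by (simp only: card_cartesian_product card_atLeastAtMost_int power2_eq_square) (simp add: n1)
  have cardC: "card Cells = (2*M+1)^(2*k)" unfolding Cells_def card_lists_length_eq[OF finS] cardS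
    by (simp add: power_mult)
  have finC: "finite Cells" unfolding Cells_def using finite_lists_length_eq[OF finS] by simp
  have fl: "-int M \<le> \<lfloor>x * real M\<rfloor> \<and> \<lfloor>x * real M\<rfloor> \<le> int M" if "\<bar>x\<bar> \<le> 1" for x
  proof -
    have "-1 \<le> x" "x \<le> 1" using that by (auto simp: abs_le_iff)
    then have "- 1 * real M \<le> x * real M" "x * real M \<le> 1 * real M"
      by (intro mult_right_mono; simp)+
    then show ?thesis by linarith
  qed
  have img: "(cell k M \<circ> f) ` I \<subseteq> Cells"
  proof
    fix c assume "c \<in> (cell k M \<circ> f) ` I"
    then obtain i where i: "i \<in> I" "c = cell k M (f i)" by auto
    have "\<bar>Re (f i t)\<bar> \<le> 1 \<and> \<bar>Im (f i t)\<bar> \<le> 1" if "t < k" for t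
    proof -
      have "(cmod (f i t))\<^sup>2 \<le> 1" using cmod_le_nsq[OF that, of "f i"] bnd i by auto
      then have "cmod (f i t) \<le> 1" by (simp add: power_le_one_iff)
      then show ?thesis using abs_Re_le_cmod abs_Im_le_cmod order_trans by metis
    qed
    then show "c \<in> Cells" unfolding Cells_def S_def i cell_def using fl by (auto simp: o_def)
  qed
  have inj: "inj_on (cell k M \<circ> f) I"
  proof (rule inj_onI, rule ccontr)
    fix i j assume ij: "i \<in> I" "j \<in> I" "(cell k M \<circ> f) i = (cell k M \<circ> f) j" "i \<noteq> j"
    have dle: "d \<le> nrm k (f i - f j)" using sep ij by auto
    have kpos: "k > 0"
    proof (rule ccontr)
      assume "\<not> k > 0" then have "nrm k (f i - f j) = 0" by (simp add: nrm_def nsq_def)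
      with dle dpos show False by simp
    qed
    have trm: "(cmod ((f i - f j) t))\<^sup>2 * (real M)\<^sup>2 < 2" if t: "t < k" for t
    proof -
      have "\<lfloor>Re (f i t) * real M\<rfloor> = \<lfloor>Re (f j t) * real M\<rfloor>"
           "\<lfloor>Im (f i t) * real M\<rfloor> = \<lfloor>Im (f j t) * real M\<rfloor>"
        using ij(3) t unfolding cell_def by (auto simp: list_eq_iff_nth_eq)
      then have h1: "\<bar>Re ((f i - f j) t) * real M\<bar> < 1" "\<bar>Im ((f i - f j) t) * real M\<bar> < 1"
        using floor_eq_close by (auto simp: left_diff_distrib)
      have "(Re ((f i - f j) t) * real M)\<^sup>2 < 1" "(Im ((f i - f j) t) * real M)\<^sup>2 < 1"
        using h1 by (simp_all add: abs_square_less_1)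
      moreover have "(cmod ((f i - f j) t))\<^sup>2 * (real M)\<^sup>2 =
          (Re ((f i - f j) t) * real M)\<^sup>2 + (Im ((f i - f j) t) * real M)\<^sup>2"
        by (rule cmod_sq_scale)
      ultimately show ?thesis by linarith
    qed
    have "nsq k (f i - f j) * (real M)\<^sup>2 = (\<Sum>t<k. (cmod ((f i - f j) t))\<^sup>2 * (real M)\<^sup>2)"
      unfolding nsq_def by (simp add: sum_distrib_right)
    also have "\<dots> < (\<Sum>t<k. 2)" using kpos trm by (intro sum_strict_mono) auto
    also have "\<dots> = real (2*k)" by simp
    also have "\<dots> \<le> (d * real M)\<^sup>2" by (rule dM)
    also have "\<dots> \<le> nsq k (f i - f j) * (real M)\<^sup>2"
    proof -
      have "d\<^sup>2 \<le> nsq k (f i - f j)" using dle dpos unfolding nrm_def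
        by (metis less_le_not_le nsq_nonneg power_mono real_sqrt_pow2)
      then show ?thesis by (simp add: power_mult_distrib mult_right_mono)
    qed
    finally show False by simp
  qed
  have "card I = card ((cell k M \<circ> f) ` I)" using card_image[OF inj] by simp
  also have "\<dots> \<le> card Cells"
    using img finC by (intro card_mono) auto
  finally show ?thesis using cardC by simp
qed




definition dl :: "nat \<Rightarrow> ab \<Rightarrow> nat" where
  "dl q s = (if q = 0 then (if s = SymA then 1 else 2) else if q = 1 then 0
             else if q = 2 then (if s = SymA then 0 else 3) else 3)"

definition Lang :: "ab list set" where "Lang = {x. foldl dl 0 x = 0}"

lemma dead: "foldl dl 3 z = 3"
  by (induction z) (auto simp: dl_def)

lemma repA: "foldl dl 0 (replicate (2*m) SymA) = 0"
  by (induction m) (auto simp: dl_def)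

definition blk :: "bool \<Rightarrow> ab" where "blk b = (if b then SymB else SymA)"

definition enc :: "bool list \<Rightarrow> ab list" where
  "enc bs = concat (map (\<lambda>b. [blk b, SymA]) bs)"

lemma enc_snoc: "enc (bs @ [b]) = enc bs @ [blk b, SymA]" by (simp add: enc_def)
lemma enc_len: "length (enc bs) = 2 * length bs"
  by (induction bs) (auto simp: enc_def)
lemma enc_dl0: "foldl dl 0 (enc bs) = 0"
proof (induction bs rule: rev_induct)
  case Nil then show ?case by (simp add: enc_def)
next
  case (snoc b bs) then show ?case by (simp add: enc_snoc dl_def blk_def)
qed
lemma enc_inj: "inj enc"
proof (rule injI)
  fix xs ys assume "enc xs = enc ys"
  then show "xs = ys"
  proof (induction xs arbitrary: ys)
    case Nil then show ?case by (cases ys) (auto simp: enc_def)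
  next
    case (Cons x xs) then show ?case
      by (cases ys) (auto simp: enc_def blk_def split: if_splits)
  qed
qed

lemma zip_app: "zip (x @ y) zs = zip x zs @ zip y (drop (length x) zs)"
proof (induction x arbitrary: zs)
  case Nil then show ?case by simp
next
  case (Cons a x) then show ?case by (cases zs) auto
qed

lemma Lang_REG: "Lang \<in> REG"
  unfolding REG_def Lang_def dfa_ok_def
  by (rule CollectI, rule exI[of _ 4], rule exI[of _ dl], rule exI[of _ 0], rule exI[of _ "{0}"])
     (auto simp: dl_def)

lemma sqrt_gap:
  fixes qa qb c :: real
  assumes "0 \<le> qb" "qa \<le> 1" "qb \<le> 1" "c \<le> qa - qb" "0 < c"
  shows "c / 2 \<le> sqrt qa - sqrt qb"
proof -
  have qa0: "0 \<le> qa" using assms by linarith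
  define s where "s = sqrt qa"
  define t where "t = sqrt qb"
  have s: "0 \<le> s" "s \<le> 1" "s\<^sup>2 = qa" using assms qa0 by (auto simp: s_def)
  have t: "0 \<le> t" "t \<le> 1" "t\<^sup>2 = qb" using assms by (auto simp: t_def)
  have "(s - t) * (s + t) \<ge> c" using s t assms by (simp add: power2_eq_square algebra_simps)
  moreover have "s + t \<le> 2" using s t by simp
  moreover have "s - t \<ge> 0"
  proof (rule ccontr)
    assume "\<not> s - t \<ge> 0"
    then have "(s - t) * (s + t) \<le> 0" using s t by (intro mult_nonpos_nonneg) auto
    with \<open>(s - t) * (s + t) \<ge> c\<close> assms show False by simp
  qed
  ultimately have "c \<le> (s - t) * 2"
    by (meson mult_left_mono order_trans)
  then show ?thesis unfolding s_def t_def by simp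
qed




locale advq = qctx k U A R for k and U :: "(ab \<times> nat) tape \<Rightarrow> nat \<Rightarrow> nat \<Rightarrow> complex" and A R +
  fixes eps :: real and h :: "nat \<Rightarrow> nat list" and q0 :: nat
  assumes eps0: "0 \<le> eps" and eps1: "eps < 1/2"
    and hlen: "\<And>n. length (h n) = n"
    and q0: "q0 < k" "q0 \<notin> A" "q0 \<notin> R"
    and accL: "\<And>x. x \<in> Lang \<Longrightarrow> acc_prob k U A R q0 (track x (h (length x))) \<ge> 1 - eps"
    and rejL: "\<And>x. x \<notin> Lang \<Longrightarrow> rej_prob k U A R q0 (track x (h (length x))) \<ge> 1 - eps"
begin

definition e0 :: "nat \<Rightarrow> complex" where "e0 = (\<lambda>i. if i = q0 then 1 else 0)"

lemma nsq_e0: "nsq k e0 = 1"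
proof -
  have "nsq k e0 = (\<Sum>i<k. if i = q0 then 1 else 0)"
    unfolding nsq_def e0_def by (rule sum.cong) auto
  also have "\<dots> = 1" using q0 by simp
  finally show ?thesis .
qed

definition sy :: "nat \<Rightarrow> ab list \<Rightarrow> (ab \<times> nat) tape list" where
  "sy n x = map Sym (zip x (h n))"
definition rest :: "nat \<Rightarrow> nat \<Rightarrow> ab list \<Rightarrow> (ab \<times> nat) tape list" where
  "rest n t y = map Sym (zip y (drop t (h n)))"

definition psi where "psi n x = st (LEnd # sy n x) e0"
definition D where "D n x = nsq k (psi n x)"
definition aN where "aN n x = haltp k U NN A (LEnd # sy n x) e0"
definition rN where "rN n x = haltp k U NN R (LEnd # sy n x) e0"

lemma sy_app: "sy n (x @ y) = sy n x @ rest n (length x) y"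
  by (simp add: sy_def rest_def zip_app)

lemma cons1: "aN n x + rN n x + D n x = 1"
  using conservation[of "LEnd # sy n x" e0] nsq_e0 unfolding aN_def rN_def D_def psi_def by simp

lemma psi_app: "psi n (x @ y) = st (rest n (length x) y) (psi n x)"
  unfolding psi_def sy_app by (simp add: st_append)

lemma aN_app: "aN n (x @ y) = aN n x + haltp k U NN A (rest n (length x) y) (psi n x)"
  unfolding aN_def psi_def sy_app using haltp_append[of A "LEnd # sy n x"] by simp
lemma rN_app: "rN n (x @ y) = rN n x + haltp k U NN R (rest n (length x) y) (psi n x)"
  unfolding rN_def psi_def sy_app using haltp_append[of R "LEnd # sy n x"] by simp

lemma D_app: "D n (x @ y) = nsq k (st (rest n (length x) y) (psi n x))"
  unfolding D_def psi_app ..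

lemma D_mono: "D n (x @ y) \<le> D n x"
  unfolding D_app using haltp_le(3) by (simp add: D_def)

lemma aN_mono: "aN n x \<le> aN n (x @ y)"
  unfolding aN_app using haltp_nonneg by simp
lemma aN_drop: "aN n (x @ y) - aN n x \<le> D n x - D n (x @ y)"
  using cons1[of n x] cons1[of n "x @ y"] unfolding rN_app using haltp_nonneg[of R "rest n (length x) y" "psi n x"] by simp

lemma D_nonneg: "0 \<le> D n x" unfolding D_def by (rule nsq_nonneg)
lemma D_le1: "D n x \<le> 1"
  using cons1[of n x] haltp_nonneg unfolding aN_def rN_def by (smt (verit))

lemma acc_split:
  assumes "length (x @ y) = n"
  shows "acc_prob k U A R q0 (track (x @ y) (h (length (x @ y)))) =
         aN n x + haltp k U NN A (rest n (length x) y @ [REnd]) (psi n x)"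
proof -
  have "tape_of (track (x @ y) (h (length (x @ y)))) = (LEnd # sy n x) @ (rest n (length x) y @ [REnd])"
    using assms by (simp add: tape_of_def track_def sy_app[symmetric]) (simp add: sy_def)
  then show ?thesis unfolding acc_prob_def aN_def psi_def
    by (simp only: haltp_append e0_def)
qed

lemma rej_split:
  assumes "length (x @ y) = n"
  shows "rej_prob k U A R q0 (track (x @ y) (h (length (x @ y)))) =
         rN n x + haltp k U NN R (rest n (length x) y @ [REnd]) (psi n x)"
proof -
  have "tape_of (track (x @ y) (h (length (x @ y)))) = (LEnd # sy n x) @ (rest n (length x) y @ [REnd])"
    using assms by (simp add: tape_of_def track_def sy_app[symmetric]) (simp add: sy_def)
  then show ?thesis unfolding rej_prob_def rN_def psi_def
    by (simp only: haltp_append e0_def)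
qed

lemma psi_step:
  assumes "length x < n"
  shows "psi n (x @ [c]) = stp (Sym (c, h n ! length x)) (psi n x)"
proof -
  have "drop (length x) (h n) = h n ! length x # drop (Suc (length x)) (h n)"
    using assms hlen by (simp add: Cons_nth_drop_Suc)
  then show ?thesis unfolding psi_app rest_def by simp
qed

lemma dist_step:
  assumes "length x = length y" "length x < n"
  shows "nrm k (psi n x - psi n y) \<le> nrm k (psi n (x @ [c]) - psi n (y @ [c]))
          + sqrt (D n x - D n (x @ [c])) + sqrt (D n y - D n (y @ [c]))"
  unfolding D_def psi_step[OF assms(2)] psi_step[of y, OF assms(2)[unfolded assms(1)]] assms(1)
  by (rule step_dist)

lemma sep:
  assumes len: "length x = length y" "length x + 2 \<le> n" "even n" "even (length x)"
    and Lx: "foldl dl 0 x = 0" and Ly: "foldl dl 0 y = 0"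
    and aa: "aN n (x @ [SymA]) \<le> aN n (y @ [SymB]) + \<delta>" and dl: "\<delta> \<le> (1 - 2*eps)/2"
  shows "(1 - 2*eps)/4 \<le> nrm k (psi n (x @ [SymA]) - psi n (y @ [SymB]))"
proof -
  define m where "m = (n - length x - 2) div 2"
  have m: "n - length x - 2 = 2*m" using len unfolding m_def by auto
  define z where "z = SymB # replicate (2*m) SymA"
  have l1: "length ((x @ [SymA]) @ z) = n" using m len unfolding z_def by simp
  have l2: "length ((y @ [SymB]) @ z) = n" using m len unfolding z_def by simp
  have in1: "(x @ [SymA]) @ z \<in> Lang" using Lx repA[of m] unfolding Lang_def z_def by (simp add: dl_def)
  have in2: "(y @ [SymB]) @ z \<notin> Lang"
  proof -
    have "foldl dl 0 ((y @ [SymB]) @ z) = foldl dl 3 (replicate (2*m) SymA)"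
      using Ly unfolding z_def by (simp add: dl_def)
    then show ?thesis unfolding Lang_def using dead by simp
  qed
  define T where "T = rest n (Suc (length x)) z @ [REnd]"
  have T2: "T = rest n (length (y @ [SymB])) z @ [REnd]" using len unfolding T_def by simp
  define qa where "qa = haltp k U NN A T (psi n (x @ [SymA]))"
  define qb where "qb = haltp k U NN A T (psi n (y @ [SymB]))"
  have "aN n (x @ [SymA]) + qa \<ge> 1 - eps"
    using accL[OF in1] acc_split[OF l1] unfolding qa_def T_def by simp
  have "rN n (y @ [SymB]) + haltp k U NN R T (psi n (y @ [SymB])) \<ge> 1 - eps"
    using rejL[OF in2] rej_split[OF l2] unfolding T2 by simp
  moreover have "qb + haltp k U NN R T (psi n (y @ [SymB])) \<le> D n (y @ [SymB])"
    using conservation[of T "psi n (y @ [SymB])"] nsq_nonneg[of k] unfolding qb_def D_def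
    by (smt (verit))
  moreover note cons1[of n "y @ [SymB]"]
  ultimately have qb_le: "qb \<le> eps - aN n (y @ [SymB])" by linarith
  have qa1: "qa \<le> 1" using haltp_le(1)[of T "psi n (x @ [SymA])"] D_le1[of n "x @ [SymA]"]
    unfolding qa_def D_def by linarith
  have qb1: "qb \<le> 1" using haltp_le(1)[of T "psi n (y @ [SymB])"] D_le1[of n "y @ [SymB]"]
    unfolding qb_def D_def by linarith
  have qb0: "0 \<le> qb" unfolding qb_def by (rule haltp_nonneg)
  have gap: "(1 - 2*eps)/2 \<le> qa - qb"
    using \<open>aN n (x @ [SymA]) + qa \<ge> 1 - eps\<close> qb_le aa dl by (smt (verit) field_sum_of_halves)
  have "(1 - 2*eps)/2/2 \<le> sqrt qa - sqrt qb"
    by (rule sqrt_gap[OF qb0 qa1 qb1 gap]) (use eps1 in simp)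
  also have "\<dots> \<le> nrm k (psi n (x @ [SymA]) - psi n (y @ [SymB]))"
    using seminorm[of A T "psi n (x @ [SymA])" "psi n (y @ [SymB])"] A_sub
    unfolding qa_def qb_def by (auto simp: abs_le_iff)
  finally show ?thesis by simp
qed

end



context advq begin

definition Win where
  "Win n u r \<delta> \<longleftrightarrow> (\<forall>w. length w = 2*r \<and> foldl dl 0 w = 0 \<longrightarrow> D n u - D n (u @ w) \<le> \<delta>)"

lemma win_chain:
  assumes W: "Win n u r \<delta>" and cs: "length cs < r"
  defines "x \<equiv> u @ enc cs"
  shows "D n u - D n (x @ [blk c, SymA]) \<le> \<delta>"
    "D n (x @ [blk c, SymA]) \<le> D n (x @ [blk c])"
    "D n (x @ [blk c]) \<le> D n x" "D n x \<le> D n u"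
proof -
  define w where "w = enc cs @ [blk c, SymA] @ replicate (2*(r - length cs - 1)) SymA"
  have lw: "length w = 2*r" using cs unfolding w_def by (simp add: enc_len)
  have fw: "foldl dl 0 w = 0" unfolding w_def
    using repA[of "r - Suc (length cs)"] by (simp add: enc_dl0 dl_def blk_def)
  have "D n u - D n (u @ w) \<le> \<delta>" using W lw fw unfolding Win_def by blast
  moreover have "D n (u @ w) \<le> D n (x @ [blk c, SymA])"
    using D_mono[of n "x @ [blk c, SymA]"] unfolding w_def x_def by simp
  ultimately show "D n u - D n (x @ [blk c, SymA]) \<le> \<delta>" by linarith
  show "D n (x @ [blk c, SymA]) \<le> D n (x @ [blk c])" using D_mono[of n "x @ [blk c]" "[SymA]"] by simp
  show "D n (x @ [blk c]) \<le> D n x" by (rule D_mono)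
  show "D n x \<le> D n u" unfolding x_def by (rule D_mono)
qed

lemma sqrt_le_d: "0 \<le> \<delta> \<Longrightarrow> a \<le> \<delta> \<Longrightarrow> sqrt a \<le> sqrt \<delta>" by simp

lemma level:
  assumes W: "Win n u r \<delta>" and Lu: "foldl dl 0 u = 0" and eu: "even (length u)" and en: "even n"
    and ln: "length u + 2*r \<le> n" and dl: "\<delta> \<le> (1 - 2*eps)/2" and d0: "0 \<le> \<delta>"
  shows "j \<le> r \<Longrightarrow> \<forall>bs bs'. length bs = j \<longrightarrow> length bs' = j \<longrightarrow> bs \<noteq> bs' \<longrightarrow>
     (1 - 2*eps)/4 - 4 * real j * sqrt \<delta> \<le> nrm k (psi n (u @ enc bs) - psi n (u @ enc bs'))"
proof (induction j)
  case 0 then show ?case by simp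
next
  case (Suc j)
  let ?g = "(1 - 2*eps)/4" and ?e = "sqrt \<delta>"
  have jr: "j < r" using Suc.prems by simp
  have IH: "\<forall>bs bs'. length bs = j \<longrightarrow> length bs' = j \<longrightarrow> bs \<noteq> bs' \<longrightarrow>
     ?g - 4 * real j * ?e \<le> nrm k (psi n (u @ enc bs) - psi n (u @ enc bs'))"
    using Suc.IH[OF Suc_leD[OF Suc.prems]] .
  have e0': "0 \<le> ?e" using d0 by simp
  have jpos: "0 \<le> real j * ?e" using e0' by simp
  have jeq: "4 * real (Suc j) * ?e = 4 * (real j * ?e) + 4 * ?e" by (simp add: algebra_simps)
  show ?case
  proof (intro allI impI)
    fix bs bs' :: "bool list"
    assume lb: "length bs = Suc j" and lb': "length bs' = Suc j" and ne: "bs \<noteq> bs'"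
    obtain cs c where bs: "bs = cs @ [c]" using lb by (metis length_Suc_conv_rev)
    obtain cs' c' where bs': "bs' = cs' @ [c']" using lb' by (metis length_Suc_conv_rev)
    have lc: "length cs = j" "length cs' = j" using lb lb' bs bs' by auto
    define x where "x = u @ enc cs"
    define y where "y = u @ enc cs'"
    have lxy: "length x = length y" "length x + 2 \<le> n" "length x < n"
      "length (x @ [blk c]) < n" "length (y @ [blk c']) < n"
      using lc ln jr unfolding x_def y_def by (auto simp: enc_len)
    have lsn: "\<And>a b. length (x @ [a]) = length (y @ [b])" "\<And>a. length (x @ [a]) < n"
      "\<And>a. length (y @ [a]) < n" using lxy by auto
    have ex: "even (length x)" using eu unfolding x_def by (simp add: enc_len)
    have Lx: "foldl dl 0 x = 0" "foldl dl 0 y = 0" using Lu unfolding x_def y_def by (simp_all add: enc_dl0)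
    note cx = win_chain(1-3)[OF W, where cs=cs and c=c, folded x_def] and cy = win_chain(1-3)[OF W, where cs=cs' and c=c', folded y_def]
    have cx4: "D n x \<le> D n u" "D n y \<le> D n u" unfolding x_def y_def by (rule D_mono)+
    have cx': "sqrt (D n x - D n (x @ [blk c])) \<le> ?e"
      "sqrt (D n (x @ [blk c]) - D n ((x @ [blk c]) @ [SymA])) \<le> ?e"
      using cx cx4 lc jr by (auto intro!: sqrt_le_d)
    have cy': "sqrt (D n y - D n (y @ [blk c'])) \<le> ?e"
      "sqrt (D n (y @ [blk c']) - D n ((y @ [blk c']) @ [SymA])) \<le> ?e"
      using cy cx4 lc jr by (auto intro!: sqrt_le_d)
    have goal_eq: "nrm k (psi n (u @ enc bs) - psi n (u @ enc bs')) =
       nrm k (psi n ((x @ [blk c]) @ [SymA]) - psi n ((y @ [blk c']) @ [SymA]))"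
      unfolding bs bs' x_def y_def by (simp add: enc_snoc)
    show "?g - 4 * real (Suc j) * ?e \<le> nrm k (psi n (u @ enc bs) - psi n (u @ enc bs'))"
    proof (cases "c = c'")
      case True
      then have "cs \<noteq> cs'" using ne bs bs' by auto
      then have h0: "?g - 4 * real j * ?e \<le> nrm k (psi n x - psi n y)"
        using IH lc unfolding x_def y_def by blast
      have h1: "nrm k (psi n x - psi n y) \<le> nrm k (psi n (x @ [blk c]) - psi n (y @ [blk c])) + ?e + ?e"
        using dist_step[OF lxy(1) lxy(3), of "blk c"] cx'(1) cy'(1)[folded True] by linarith
      have h2: "nrm k (psi n (x @ [blk c]) - psi n (y @ [blk c])) \<le>
         nrm k (psi n ((x @ [blk c]) @ [SymA]) - psi n ((y @ [blk c]) @ [SymA])) + ?e + ?e"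
        using dist_step[OF lsn(1)[of "blk c" "blk c"] lsn(2)[of "blk c"], of SymA] cx'(2) cy'(2)[folded True] by linarith
      show ?thesis unfolding goal_eq using h0 h1 h2 True by (simp add: algebra_simps)
    next
      case False
      have aNx: "aN n (x @ [blk c]) \<le> aN n u + \<delta>"
        using aN_drop[of n u "enc cs @ [blk c]"] cx(1) cx(2) lc jr unfolding x_def by simp
      have aNy: "aN n (y @ [blk c']) \<le> aN n u + \<delta>"
        using aN_drop[of n u "enc cs' @ [blk c']"] cy(1) cy(2) lc jr unfolding y_def by simp
      have aNu: "aN n u \<le> aN n (x @ [blk c])" "aN n u \<le> aN n (y @ [blk c'])"
        unfolding x_def y_def using aN_mono by (metis append_assoc)+
      show ?thesis
      proof (cases c)
        case False
        with \<open>c \<noteq> c'\<close> have c': "c'" by simp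
        have bb: "blk c = SymA" "blk c' = SymB" using False c' by (auto simp: blk_def)
        have "?g \<le> nrm k (psi n (x @ [SymA]) - psi n (y @ [SymB]))"
          by (rule sep) (use lxy ex en Lx aNx aNu False c' dl in \<open>auto simp: blk_def\<close>)
        moreover have "nrm k (psi n (x @ [SymA]) - psi n (y @ [SymB])) \<le>
           nrm k (psi n ((x @ [SymA]) @ [SymA]) - psi n ((y @ [SymB]) @ [SymA])) + ?e + ?e"
          using dist_step[OF lsn(1)[of SymA SymB] lsn(2)[of SymA], of SymA] cx'(2)[unfolded bb] cy'(2)[unfolded bb]
          by linarith
        ultimately show ?thesis unfolding goal_eq bb using e0' jpos jeq by linarith
      next
        case True
        with \<open>c \<noteq> c'\<close> have c': "\<not> c'" by simp
        have bb: "blk c = SymB" "blk c' = SymA" using True c' by (auto simp: blk_def)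
        have "?g \<le> nrm k (psi n (y @ [SymA]) - psi n (x @ [SymB]))"
          by (rule sep) (use lxy ex en Lx aNy aNu True c' dl in \<open>auto simp: blk_def\<close>)
        moreover have "nrm k (psi n (y @ [SymA]) - psi n (x @ [SymB])) \<le>
           nrm k (psi n ((y @ [SymA]) @ [SymA]) - psi n ((x @ [SymB]) @ [SymA])) + ?e + ?e"
          using dist_step[OF lsn(1)[of SymB SymA, symmetric] lsn(3)[of SymA], of SymA] cx'(2)[unfolded bb] cy'(2)[unfolded bb]
          by linarith
        moreover have "nrm k (psi n ((y @ [SymA]) @ [SymA]) - psi n ((x @ [SymB]) @ [SymA])) =
          nrm k (psi n ((x @ [SymB]) @ [SymA]) - psi n ((y @ [SymA]) @ [SymA]))"
          by (rule nrm_minus_comm)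
        ultimately show ?thesis unfolding goal_eq bb using e0' jpos jeq by linarith
      qed
    qed
  qed
qed

end



lemma ex_argmin:
  fixes f :: "'x \<Rightarrow> real"
  assumes "finite S" "S \<noteq> {}"
  shows "\<exists>x\<in>S. \<forall>y\<in>S. f x \<le> f y"
proof -
  have "Min (f ` S) \<in> f ` S" using assms by simp
  then obtain x where "x \<in> S" "f x = Min (f ` S)" by auto
  then show ?thesis using assms by (metis Min_le finite_imageI imageI)
qed

lemma ab_UNIV: "(UNIV :: ab set) = {SymA, SymB}"
  using ab.exhaust by auto

context advq begin

definition Wset :: "nat \<Rightarrow> ab list set" where
  "Wset r = {w. length w = 2*r \<and> foldl dl 0 w = 0}"

lemma Wset_fin: "finite (Wset r)"
proof -
  have "Wset r \<subseteq> {w. set w \<subseteq> {SymA, SymB} \<and> length w = 2*r}"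
    unfolding Wset_def using ab_UNIV by auto
  moreover have "finite {w. set w \<subseteq> {SymA, SymB} \<and> length w = 2*r}"
    by (rule finite_lists_length_eq) simp
  ultimately show ?thesis by (rule finite_subset)
qed

lemma Wset_ne: "replicate (2*r) SymA \<in> Wset r"
  unfolding Wset_def using repA by simp

definition best :: "nat \<Rightarrow> nat \<Rightarrow> ab list \<Rightarrow> ab list" where
  "best n r u = (SOME w. w \<in> Wset r \<and> (\<forall>w'\<in>Wset r. D n (u @ w) \<le> D n (u @ w')))"

lemma best: "best n r u \<in> Wset r" "\<And>w'. w' \<in> Wset r \<Longrightarrow> D n (u @ best n r u) \<le> D n (u @ w')"
proof -
  have "\<exists>w. w \<in> Wset r \<and> (\<forall>w'\<in>Wset r. D n (u @ w) \<le> D n (u @ w'))"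
    using ex_argmin[OF Wset_fin, of r "\<lambda>w. D n (u @ w)"] Wset_ne[of r] by blast
  then have "best n r u \<in> Wset r \<and> (\<forall>w'\<in>Wset r. D n (u @ best n r u) \<le> D n (u @ w'))"
    unfolding best_def by (rule someI_ex)
  then show "best n r u \<in> Wset r" "\<And>w'. w' \<in> Wset r \<Longrightarrow> D n (u @ best n r u) \<le> D n (u @ w')"
    by auto
qed

definition path :: "nat \<Rightarrow> nat \<Rightarrow> nat \<Rightarrow> ab list" where
  "path n r j = ((\<lambda>u. u @ best n r u) ^^ j) []"

lemma path_Suc: "path n r (Suc j) = path n r j @ best n r (path n r j)"
  unfolding path_def by simp

lemma path_props: "length (path n r j) = 2*r*j \<and> foldl dl 0 (path n r j) = 0"
proof (induction j)
  case 0 then show ?case by (simp add: path_def)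
next
  case (Suc j)
  have "best n r (path n r j) \<in> Wset r" by (rule best)
  then show ?case using Suc unfolding path_Suc Wset_def by simp
qed

theorem contra: False
proof -
  define \<gamma> where "\<gamma> = (1 - 2*eps)/4"
  have g0: "0 < \<gamma>" using eps1 unfolding \<gamma>_def by simp
  define d where "d = \<gamma>/2"
  have d0: "0 < d" using g0 unfolding d_def by simp
  define M where "M = nat \<lceil>sqrt (real (2*k)) / d\<rceil> + 1"
  have M0: "M > 0" unfolding M_def by simp
  have "sqrt (real (2*k)) / d \<le> real M" unfolding M_def by linarith
  then have "sqrt (real (2*k)) \<le> d * real M" using d0 by (simp add: divide_le_eq mult.commute)
  then have dM: "real (2*k) \<le> (d * real M)\<^sup>2"
    by (metis of_nat_0_le_iff power_mono real_sqrt_ge_zero real_sqrt_pow2)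
  define r where "r = (2*M+1)^(2*k)"
  have r0: "r > 0" unfolding r_def by simp
  define \<delta> where "\<delta> = min ((1 - 2*eps)/2) ((d / (4 * real r))\<^sup>2)"
  have dpos: "0 < \<delta>" unfolding \<delta>_def using eps1 d0 r0 by simp
  have dle: "\<delta> \<le> (1 - 2*eps)/2" unfolding \<delta>_def by (rule min.cobounded1)
  have sd: "4 * real r * sqrt \<delta> \<le> d"
  proof -
    have "\<delta> \<le> (d / (4 * real r))\<^sup>2" unfolding \<delta>_def by (rule min.cobounded2)
    then have "sqrt \<delta> \<le> sqrt ((d / (4 * real r))\<^sup>2)" by (rule real_sqrt_le_mono)
    also have "\<dots> = d / (4 * real r)" using d0 r0 by simp
    finally show ?thesis using r0 by (simp add: field_simps)
  qed
  define W where "W = nat \<lceil>1/\<delta>\<rceil> + 1"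
  have W0: "W > 0" unfolding W_def by simp
  have Wd: "1 / real W \<le> \<delta>"
  proof -
    have "1/\<delta> \<le> real W" unfolding W_def by linarith
    then show ?thesis using dpos W0 by (simp add: divide_le_eq mult.commute)
  qed
  define n where "n = 2*r*W"
  let ?p = "path n r"
  have tel: "(\<Sum>j<W. D n (?p j) - D n (?p (Suc j))) = D n (?p 0) - D n (?p W)"
    by (rule sum_lessThan_telescope')
  have "D n (?p 0) - D n (?p W) \<le> 1" using D_le1[of n "?p 0"] D_nonneg[of n "?p W"] by linarith
  then obtain j where j: "j < W" "D n (?p j) - D n (?p (Suc j)) \<le> 1 / real W"
  proof -
    assume hyp: "\<And>j. j < W \<Longrightarrow> D n (?p j) - D n (?p (Suc j)) \<le> 1 / real W \<Longrightarrow> thesis"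
    show thesis
    proof (rule ccontr)
      assume "\<not> thesis"
      then have "\<forall>j<W. 1 / real W < D n (?p j) - D n (?p (Suc j))" using hyp by force
      then have "(\<Sum>j<W. 1 / real W) < (\<Sum>j<W. D n (?p j) - D n (?p (Suc j)))"
        using W0 by (intro sum_strict_mono) auto
      also have "\<dots> \<le> 1" using tel \<open>D n (?p 0) - D n (?p W) \<le> 1\<close> by simp
      finally show False using W0 by simp
    qed
  qed
  define u where "u = ?p j"
  have Win: "Win n u r \<delta>" unfolding Win_def
  proof (intro allI impI)
    fix w assume "length w = 2*r \<and> foldl dl 0 w = 0"
    then have "w \<in> Wset r" unfolding Wset_def by simp
    then have "D n (u @ best n r u) \<le> D n (u @ w)" by (rule best)
    then show "D n u - D n (u @ w) \<le> \<delta>" using j Wd unfolding u_def path_Suc by simp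
  qed
  have pu: "length u = 2*r*j" "foldl dl 0 u = 0" using path_props unfolding u_def by auto
  have lun: "length u + 2*r \<le> n"
  proof -
    have "Suc j \<le> W" using j by simp
    then have "2*r*(Suc j) \<le> 2*r*W" by (intro mult_le_mono2)
    then show ?thesis unfolding n_def using pu by simp
  qed
  have lev: "\<forall>bs bs'. length bs = r \<longrightarrow> length bs' = r \<longrightarrow> bs \<noteq> bs' \<longrightarrow>
     (1 - 2*eps)/4 - 4 * real r * sqrt \<delta> \<le> nrm k (psi n (u @ enc bs) - psi n (u @ enc bs'))"
    by (rule level[OF Win pu(2) _ _ lun dle]) (use pu dpos in \<open>auto simp: n_def\<close>)
  define I where "I = {bs :: bool list. set bs \<subseteq> UNIV \<and> length bs = r}"
  have cardI: "card I = 2^r" unfolding I_def card_lists_length_eq[OF finite_UNIV] by simp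
  have "card I \<le> (2*M+1)^(2*k)"
  proof (rule packing[where f = "\<lambda>bs. psi n (u @ enc bs)" and d = d, OF _ _ d0 dM M0])
    show "\<forall>i\<in>I. nsq k (psi n (u @ enc i)) \<le> 1" using D_le1 unfolding D_def by simp
    show "\<forall>i\<in>I. \<forall>j\<in>I. i \<noteq> j \<longrightarrow> d \<le> nrm k (psi n (u @ enc i) - psi n (u @ enc j))"
    proof (intro ballI impI)
      fix i j assume "i \<in> I" "j \<in> I" "i \<noteq> j"
      then have "(1 - 2*eps)/4 - 4 * real r * sqrt \<delta> \<le> nrm k (psi n (u @ enc i) - psi n (u @ enc j))"
        using lev unfolding I_def by blast
      then show "d \<le> nrm k (psi n (u @ enc i) - psi n (u @ enc j))"
        using sd unfolding d_def \<gamma>_def by linarith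
    qed
  qed
  then show False using cardI less_exp[of r] unfolding r_def[symmetric] by linarith
qed

end



lemma Lang_not_QFA: "Lang \<notin> QFA_n"
proof
  assume "Lang \<in> QFA_n"
  then obtain eps g h k A R q0 and U :: "(ab \<times> nat) tape \<Rightarrow> nat \<Rightarrow> nat \<Rightarrow> complex" where
    H: "0 \<le> eps" "eps < 1/2" "advice_ok g h" "qfa_ok k U A R q0"
      "\<forall>x. (x \<in> Lang \<longrightarrow> acc_prob k U A R q0 (track x (h (length x))) \<ge> 1 - eps) \<and>
           (x \<notin> Lang \<longrightarrow> rej_prob k U A R q0 (track x (h (length x))) \<ge> 1 - eps)"
    unfolding QFA_n_def by blast
  interpret advq k U A R eps h q0
    using H unfolding qfa_ok_def advice_ok_def by unfold_locales auto
  show False by (rule contra)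
qed

lemma REG_sub_REG_n: "(REG :: 'a list set set) \<subseteq> REG_n"
proof
  fix L :: "'a list set" assume "L \<in> REG"
  then obtain k delta q0 F where d: "dfa_ok k delta q0" "L = {x. foldl delta q0 x \<in> F}"
    unfolding REG_def by blast
  define delta' where "delta' = (\<lambda>q (c :: 'a \<times> nat). delta q (fst c))"
  have fz: "foldl delta' q (zip x (replicate (length x) 0)) = foldl delta q x" for q x
    by (induction x arbitrary: q) (auto simp: delta'_def)
  show "L \<in> REG_n" unfolding REG_n_def
    apply (rule CollectI)
    apply (rule exI[of _ 1], rule exI[of _ "\<lambda>n. replicate n 0"], rule exI[of _ k],
           rule exI[of _ delta'], rule exI[of _ q0], rule exI[of _ F])
    using d by (auto simp: advice_ok_def dfa_ok_def delta'_def track_def fz[unfolded delta'_def])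
qed

theorem corollary3p5:
  shows "\<not> ((REG :: ab list set set) \<subseteq> QFA_n) \<and> (QFA_n :: ab list set set) \<noteq> REG_n"
proof
  show nsub: "\<not> ((REG :: ab list set set) \<subseteq> QFA_n)" using Lang_REG Lang_not_QFA by blast
  show "(QFA_n :: ab list set set) \<noteq> REG_n"
    using nsub REG_sub_REG_n[where 'a = ab] by auto
qed


end
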